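(* Let $m\ge2$. The problem $-\psi''+Q\psi=0$ on $\Omega$, $\psi\in H^2(\Omega)\cap K(\Omega)$, admits $m$ linearly independent solutions if and only if at least $m+1$ of the $n$ problems \[ -z''+Qz=0\ \text{on}\ \omega_i,\qquad z(a)=0,\qquad \frac{\mathrm dz}{\mathrm d\omega_i}(a_i)=0,\qquad i=1,\dots,n, \] have nontrivial solutions.
   Context: $\Omega$ is a compact star graph with $n$ edges $\omega_i=[0,a_i]$, $a_i>0$, joined at a central vertex $a$ (corresponding to $0$); $a_i$ also denotes the free endpoint of $\omega_i$. Functions on $\Omega$ are tuples $(\psi_{\omega_1},\dots,\psi_{\omega_n})$, $H^2(\Omega)=\bigoplus_iH^2(0,a_i)$, $\frac{\mathrm dz}{\mathrm d\omega_i}(a_i):=z'_{\omega_i}(a_i)$, and on a single edge $z(a)$ means $z_{\omega_i}(0)$. $K(\Omega)$ is the set of functions satisfying the Kirchhoff conditions at $a$ ($\psi_{\omega_1}(0)=\dots=\psi_{\omega_n}(0)$, $\sum_i\psi'_{\omega_i}(0)=0$) and the Neumann conditions $\psi'_{\omega_j}(a_j)=0$ at every endpoint. $Q\in L^\infty(\Omega)$ is real-valued. *)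

theory Defs
  imports "HOL-Analysis.Analysis"
begin

text \<open>A function psi on it lies in H^2(0,a) iff it is C^1
  with derivative d, and d is absolutely continuous with a square integrable derivative g,
  i.e. d x = d 0 + integral of g over [0,x].\<close>

definition H2_edge :: "real \<Rightarrow> (real \<Rightarrow> real) \<Rightarrow> (real \<Rightarrow> real) \<Rightarrow> (real \<Rightarrow> real) \<Rightarrow> bool" where
  "H2_edge a psi d g \<longleftrightarrow>
     (\<forall>x\<in>{0..a}. (psi has_real_derivative d x) (at x within {0..a})) \<and>
     g absolutely_integrable_on {0..a} \<and>
     (\<lambda>x. (g x)\<^sup>2) integrable_on {0..a} \<and>
     (\<forall>x\<in>{0..a}. d x = d 0 + integral {0..x} g)"

definition edge_sol :: "(real \<Rightarrow> real) \<Rightarrow> real \<Rightarrow> (real \<Rightarrow> real) \<Rightarrow> (real \<Rightarrow> real) \<Rightarrow> bool" where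
  "edge_sol q a psi d \<longleftrightarrow>
     (\<exists>g. H2_edge a psi d g \<and> (AE x in lebesgue. x \<in> {0..a} \<longrightarrow> - g x + q x * psi x = 0))"

text \<open>Solutions on the star graph: psi i is the component on edge i (i < n), with derivative d i;
  H^2 on every edge, the equation on every edge, Kirchhoff conditions at the centre
  (corresponding to 0 on every edge) and Neumann conditions at the free endpoints a i.\<close>

definition graph_sol :: "nat \<Rightarrow> (nat \<Rightarrow> real) \<Rightarrow> (nat \<Rightarrow> real \<Rightarrow> real) \<Rightarrow> (nat \<Rightarrow> real \<Rightarrow> real) \<Rightarrow> bool" where
  "graph_sol n a Q psi \<longleftrightarrow>
     (\<exists>d. (\<forall>i<n. edge_sol (Q i) (a i) (psi i) (d i)) \<and>
          (\<forall>i<n. \<forall>j<n. psi i 0 = psi j 0) \<and>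
          (\<Sum>i<n. d i 0) = 0 \<and>
          (\<forall>i<n. d i (a i) = 0))"

definition graph_lin_indep :: "nat \<Rightarrow> (nat \<Rightarrow> real) \<Rightarrow> nat \<Rightarrow> (nat \<Rightarrow> nat \<Rightarrow> real \<Rightarrow> real) \<Rightarrow> bool" where
  "graph_lin_indep n a m phi \<longleftrightarrow>
     (\<forall>c :: nat \<Rightarrow> real.
        (\<forall>i<n. \<forall>x\<in>{0..a i}. (\<Sum>k<m. c k * phi k i x) = 0) \<longrightarrow> (\<forall>k<m. c k = 0))"

definition edge_dirichlet_neumann_nontrivial :: "(real \<Rightarrow> real) \<Rightarrow> real \<Rightarrow> bool" where
  "edge_dirichlet_neumann_nontrivial q a \<longleftrightarrow>
     (\<exists>z dz. edge_sol q a z dz \<and> z 0 = 0 \<and> dz a = 0 \<and> (\<exists>x\<in>{0..a}. z x \<noteq> 0))"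

end

theory Submission
  imports Defs
begin


definition esol :: "(real \<Rightarrow> real) \<Rightarrow> real \<Rightarrow> (real \<Rightarrow> real) \<Rightarrow> (real \<Rightarrow> real) \<Rightarrow> (real \<Rightarrow> real) \<Rightarrow> bool" where
  "esol q a psi d g \<longleftrightarrow> H2_edge a psi d g \<and> (AE x in lebesgue. x \<in> {0..a} \<longrightarrow> - g x + q x * psi x = 0)"

lemma edge_sol_esol: "edge_sol q a psi d \<longleftrightarrow> (\<exists>g. esol q a psi d g)"
  by (simp add: edge_sol_def esol_def)

lemma esol_zero: "esol q a (\<lambda>x. 0) (\<lambda>x. 0) (\<lambda>x. 0)"
  unfolding esol_def H2_edge_def by auto

lemma esol_scale:
  assumes "esol q a p d g"
  shows "esol q a (\<lambda>x. c * p x) (\<lambda>x. c * d x) (\<lambda>x. c * g x)"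
proof -
  have D: "\<forall>x\<in>{0..a}. (p has_real_derivative d x) (at x within {0..a})"
   and G: "g absolutely_integrable_on {0..a}" and G2: "(\<lambda>x. (g x)\<^sup>2) integrable_on {0..a}"
   and F: "\<forall>x\<in>{0..a}. d x = d 0 + integral {0..x} g"
   and E: "AE x in lebesgue. x \<in> {0..a} \<longrightarrow> - g x + q x * p x = 0"
    using assms unfolding esol_def H2_edge_def by blast+
  have "\<forall>x\<in>{0..a}. ((\<lambda>x. c * p x) has_real_derivative c * d x) (at x within {0..a})"
    using D by (auto intro: DERIV_cmult)
  moreover have "(\<lambda>x. c * g x) absolutely_integrable_on {0..a}"
    using absolutely_integrable_scaleR_left[OF G, of c] by simp
  moreover have "(\<lambda>x. (c * g x)\<^sup>2) integrable_on {0..a}"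
    using integrable_on_cmult_left[OF G2, of "c^2"] by (simp add: power_mult_distrib)
  moreover have "\<forall>x\<in>{0..a}. c * d x = c * d 0 + integral {0..x} (\<lambda>x. c * g x)"
  proof
    fix x assume x: "x \<in> {0..a}"
    have "g integrable_on {0..x}"
      using G x by (intro integrable_subinterval_real[where a=0 and b=a and c=0 and d=x]) (auto simp: absolutely_integrable_on_def)
    then show "c * d x = c * d 0 + integral {0..x} (\<lambda>x. c * g x)"
    proof -
      have "c * d x = c * d 0 + c * integral {0..x} g" using F[rule_format, OF x] by (simp add: distrib_left)
      then show ?thesis by simp
    qed
  qed
  moreover have "AE x in lebesgue. x \<in> {0..a} \<longrightarrow> - (c * g x) + q x * (c * p x) = 0"
    using E by eventually_elim (simp add: algebra_simps)
  ultimately show ?thesis unfolding esol_def H2_edge_def by (intro conjI) (assumption+)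
qed

lemma esol_add:
  assumes "esol q a p1 d1 g1" "esol q a p2 d2 g2"
  shows "esol q a (\<lambda>x. p1 x + p2 x) (\<lambda>x. d1 x + d2 x) (\<lambda>x. g1 x + g2 x)"
proof -
  have D1: "\<forall>x\<in>{0..a}. (p1 has_real_derivative d1 x) (at x within {0..a})"
   and G1: "g1 absolutely_integrable_on {0..a}" and G12: "(\<lambda>x. (g1 x)\<^sup>2) integrable_on {0..a}"
   and F1: "\<forall>x\<in>{0..a}. d1 x = d1 0 + integral {0..x} g1"
   and E1: "AE x in lebesgue. x \<in> {0..a} \<longrightarrow> - g1 x + q x * p1 x = 0"
    using assms(1) unfolding esol_def H2_edge_def by blast+
  have D2: "\<forall>x\<in>{0..a}. (p2 has_real_derivative d2 x) (at x within {0..a})"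
   and G2: "g2 absolutely_integrable_on {0..a}" and G22: "(\<lambda>x. (g2 x)\<^sup>2) integrable_on {0..a}"
   and F2: "\<forall>x\<in>{0..a}. d2 x = d2 0 + integral {0..x} g2"
   and E2: "AE x in lebesgue. x \<in> {0..a} \<longrightarrow> - g2 x + q x * p2 x = 0"
    using assms(2) unfolding esol_def H2_edge_def by blast+
  have "\<forall>x\<in>{0..a}. ((\<lambda>x. p1 x + p2 x) has_real_derivative d1 x + d2 x) (at x within {0..a})"
    using D1 D2 by (auto intro: DERIV_add)
  moreover have "(\<lambda>x. g1 x + g2 x) absolutely_integrable_on {0..a}"
    using set_integral_add(1)[OF G1 G2] .
  moreover have "(\<lambda>x. (g1 x + g2 x)\<^sup>2) integrable_on {0..a}"
  proof (rule measurable_bounded_by_integrable_imp_integrable_real)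
    have m1: "g1 \<in> borel_measurable (lebesgue_on {0..a})"
      using G1 by (intro integrable_imp_measurable) (auto simp: absolutely_integrable_on_def)
    have m2: "g2 \<in> borel_measurable (lebesgue_on {0..a})"
      using G2 by (intro integrable_imp_measurable) (auto simp: absolutely_integrable_on_def)
    show "(\<lambda>x. (g1 x + g2 x)\<^sup>2) \<in> borel_measurable (lebesgue_on {0..a})"
      using m1 m2 by measurable
    show "(\<lambda>x. 2 * (g1 x)\<^sup>2 + 2 * (g2 x)\<^sup>2) integrable_on {0..a}"
      using integrable_on_cmult_left[OF G12, of 2] integrable_on_cmult_left[OF G22, of 2]
      by (intro integrable_add) auto
    show "\<bar>(g1 x + g2 x)\<^sup>2\<bar> \<le> 2 * (g1 x)\<^sup>2 + 2 * (g2 x)\<^sup>2" for x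
    proof -
      have "0 \<le> (g1 x - g2 x)\<^sup>2" by simp
      then have "(g1 x + g2 x)\<^sup>2 \<le> 2 * (g1 x)\<^sup>2 + 2 * (g2 x)\<^sup>2"
        by (simp add: power2_eq_square algebra_simps)
      then show ?thesis by simp
    qed
  qed auto
  moreover have "\<forall>x\<in>{0..a}. d1 x + d2 x = d1 0 + d2 0 + integral {0..x} (\<lambda>x. g1 x + g2 x)"
  proof
    fix x assume x: "x \<in> {0..a}"
    have i1: "g1 integrable_on {0..x}"
      using G1 x by (intro integrable_subinterval_real[where a=0 and b=a and c=0 and d=x]) (auto simp: absolutely_integrable_on_def)
    have i2: "g2 integrable_on {0..x}"
      using G2 x by (intro integrable_subinterval_real[where a=0 and b=a and c=0 and d=x]) (auto simp: absolutely_integrable_on_def)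
    show "d1 x + d2 x = d1 0 + d2 0 + integral {0..x} (\<lambda>x. g1 x + g2 x)"
    proof -
      have "d1 x + d2 x = d1 0 + d2 0 + (integral {0..x} g1 + integral {0..x} g2)"
        using F1[rule_format, OF x] F2[rule_format, OF x] by linarith
      then show ?thesis using integral_add[OF i1 i2] by simp
    qed
  qed
  moreover have "AE x in lebesgue. x \<in> {0..a} \<longrightarrow> - (g1 x + g2 x) + q x * (p1 x + p2 x) = 0"
    using E1 E2 by eventually_elim (simp add: algebra_simps)
  ultimately show ?thesis unfolding esol_def H2_edge_def by (intro conjI) (assumption+)
qed

lemma esol_sum:
  assumes "finite K" "\<And>k. k \<in> K \<Longrightarrow> esol q a (p k) (d k) (g k)"
  shows "esol q a (\<lambda>x. \<Sum>k\<in>K. p k x) (\<lambda>x. \<Sum>k\<in>K. d k x) (\<lambda>x. \<Sum>k\<in>K. g k x)"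
  using assms
proof (induction K rule: finite_induct)
  case empty
  then show ?case using esol_zero by simp
next
  case (insert k K)
  then show ?case using esol_add[OF insert(4)[of k] insert(3)] by (simp add: sum.insert[OF insert(1,2)])
qed



lemma esol_unique:
  assumes sol: "esol q a psi d g" and qb: "AE x in lebesgue. x \<in> {0..a} \<longrightarrow> \<bar>q x\<bar> \<le> B0"
    and t: "t \<in> {0..a}" and z: "psi t = 0" "d t = 0"
  shows "\<forall>x\<in>{0..a}. psi x = 0 \<and> d x = 0"
proof -
  define B where "B = max B0 0"
  have B0: "0 \<le> B" by (simp add: B_def)
  have D: "\<forall>x\<in>{0..a}. (psi has_real_derivative d x) (at x within {0..a})"
   and G: "g absolutely_integrable_on {0..a}"
   and F: "\<forall>x\<in>{0..a}. d x = d 0 + integral {0..x} g"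
   and E: "AE x in lebesgue. x \<in> {0..a} \<longrightarrow> - g x + q x * psi x = 0"
    using sol unfolding esol_def H2_edge_def by blast+
  have Gi: "g integrable_on {0..a}" using G by (simp add: absolutely_integrable_on_def)
  have AEb: "AE x in lebesgue. x \<in> {0..a} \<longrightarrow> \<bar>g x\<bar> \<le> B * \<bar>psi x\<bar>"
    using E qb
  proof eventually_elim
    case (elim x)
    show ?case
    proof
      assume x: "x \<in> {0..a}"
      then have "g x = q x * psi x" using elim by simp
      then have "\<bar>g x\<bar> = \<bar>q x\<bar> * \<bar>psi x\<bar>" by (simp add: abs_mult)
      also have "\<dots> \<le> B * \<bar>psi x\<bar>" using elim x by (intro mult_right_mono) (auto simp: B_def)
      finally show "\<bar>g x\<bar> \<le> B * \<bar>psi x\<bar>" .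
    qed
  qed
  obtain N where N: "negligible N" "\<forall>x\<in>{0..a} - N. \<bar>g x\<bar> \<le> B * \<bar>psi x\<bar>"
  proof -
    from AEb obtain N where N1: "{x \<in> space lebesgue. \<not> (x \<in> {0..a} \<longrightarrow> \<bar>g x\<bar> \<le> B * \<bar>psi x\<bar>)} \<subseteq> N"
        and N2: "emeasure lebesgue N = 0" and N3: "N \<in> sets lebesgue"
      by (rule AE_E)
    have "negligible N" using N2 N3 by (simp add: negligible_iff_null_sets null_setsI)
    moreover have "\<forall>x\<in>{0..a} - N. \<bar>g x\<bar> \<le> B * \<bar>psi x\<bar>" using N1 by auto
    ultimately show ?thesis using that by blast
  qed
  have psi_int: "(d has_integral (psi v - psi u)) {u..v}" if uv: "0 \<le> u" "u \<le> v" "v \<le> a" for u v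
  proof -
    have "(psi has_vector_derivative d x) (at x within {u..v})" if x: "x \<in> {u..v}" for x
    proof -
      have "x \<in> {0..a}" using x uv by auto
      then have "(psi has_real_derivative d x) (at x within {0..a})" using D by blast
      then have "(psi has_vector_derivative d x) (at x within {0..a})"
        by (simp add: has_real_derivative_iff_has_vector_derivative)
      then show ?thesis
        by (rule has_vector_derivative_within_subset) (use uv in auto)
    qed
    then show ?thesis using fundamental_theorem_of_calculus[OF uv(2)] by blast
  qed
  have d_diff: "d v - d u = integral {u..v} g" if uv: "0 \<le> u" "u \<le> v" "v \<le> a" for u v
  proof -
    have gv: "g integrable_on {0..v}" using Gi uv
      by (intro integrable_subinterval_real[where a=0 and b=a and c=0 and d=v]) auto
    have c: "integral {0..u} g + integral {u..v} g = integral {0..v} g"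
      using Henstock_Kurzweil_Integration.integral_combine[OF uv(1,2) gv] .
    have "v \<in> {0..a}" "u \<in> {0..a}" using uv by auto
    then have "d v = d 0 + integral {0..v} g" "d u = d 0 + integral {0..u} g"
      using F by blast+
    then show ?thesis using c by linarith
  qed
  have psi_bd: "\<bar>psi v - psi u\<bar> \<le> M * (v - u)"
    if uv: "0 \<le> u" "u \<le> v" "v \<le> a" and M: "0 \<le> M" "\<forall>x\<in>{u..v}. \<bar>d x\<bar> \<le> M" for u v M
  proof -
    have "norm (psi v - psi u) \<le> M * Henstock_Kurzweil_Integration.content {u..v}"
      by (rule has_integral_bound_real[where S="{}", OF M(1) _ psi_int[OF uv]]) (use M in auto)
    then show ?thesis using uv by (simp add: content_real)
  qed
  have d_bd: "\<bar>d v - d u\<bar> \<le> B * M * (v - u)"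
    if uv: "0 \<le> u" "u \<le> v" "v \<le> a" and M: "0 \<le> M" "\<forall>x\<in>{u..v}. \<bar>psi x\<bar> \<le> M" for u v M
  proof -
    define g' where "g' x = (if x \<in> N then 0 else g x)" for x
    have gi: "g integrable_on {u..v}" using Gi uv
      by (intro integrable_subinterval_real[where a=0 and b=a and c=u and d=v]) auto
    have eq: "integral {u..v} g = integral {u..v} g'"
      by (rule integral_spike[OF N(1)]) (auto simp: g'_def)
    have gi': "g' integrable_on {u..v}"
      by (rule integrable_spike[OF gi N(1)]) (auto simp: g'_def)
    have hi: "(g' has_integral integral {u..v} g') {u..v}" using gi' by (rule integrable_integral)
    have bd: "norm (g' x) \<le> B * M" if x: "x \<in> {u..v}" for x
    proof (cases "x \<in> N")
      case True then show ?thesis using B0 M by (simp add: g'_def)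
    next
      case False
      then have "x \<in> {0..a} - N" using x uv by auto
      then have "\<bar>g x\<bar> \<le> B * \<bar>psi x\<bar>" using N(2) by blast
      also have "\<dots> \<le> B * M" using M x B0 by (intro mult_left_mono) auto
      finally show ?thesis using False by (simp add: g'_def)
    qed
    have "norm (integral {u..v} g') \<le> (B * M) * Henstock_Kurzweil_Integration.content {u..v}"
      by (rule has_integral_bound_real[where S="{}", OF _ _ hi]) (use B0 M bd in auto)
    then show ?thesis using uv d_diff[OF uv] eq by (simp add: content_real)
  qed
  have cpsi: "continuous_on {0..a} psi" using D by (intro DERIV_continuous_on) blast
  have cd: "continuous_on {0..a} d"
  proof -
    have "continuous_on {0..a} (\<lambda>x. d 0 + integral {0..x} g)"
      by (intro continuous_on_add continuous_on_const indefinite_integral_continuous_1 Gi)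
    then show ?thesis
      by (rule continuous_on_eq) (metis F)
  qed
  define L where "L = 1 + B"
  define h where "h = 1 / (2 * L)"
  have L0: "1 \<le> L" using B0 by (simp add: L_def)
  have hpos: "0 < h" using L0 by (simp add: h_def)
  have Lh: "L * h = 1/2" using L0 by (simp add: h_def)
  have local: "psi x = 0 \<and> d x = 0"
    if s: "s \<in> {0..a}" "psi s = 0" "d s = 0" and x: "x \<in> {0..a}" "\<bar>x - s\<bar> \<le> h" for s x
  proof -
    define I where "I = {max 0 (s-h) .. min a (s+h)}"
    have sI: "s \<in> I" using s hpos by (auto simp: I_def)
    have Isub: "I \<subseteq> {0..a}" by (auto simp: I_def)
    have xI: "x \<in> I" using x by (auto simp: I_def abs_le_iff)
    have cE: "continuous_on I (\<lambda>y. \<bar>psi y\<bar> + \<bar>d y\<bar>)"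
      using continuous_on_subset[OF cpsi Isub] continuous_on_subset[OF cd Isub]
      by (intro continuous_intros) auto
    obtain x0 where x0: "x0 \<in> I" "\<forall>y\<in>I. \<bar>psi y\<bar> + \<bar>d y\<bar> \<le> \<bar>psi x0\<bar> + \<bar>d x0\<bar>"
      using continuous_attains_sup[OF _ _ cE] sI unfolding I_def by (auto simp: compact_Icc)
    define M where "M = \<bar>psi x0\<bar> + \<bar>d x0\<bar>"
    have M0: "0 \<le> M" by (simp add: M_def)
    have pb: "\<forall>y\<in>I. \<bar>psi y\<bar> \<le> M" "\<forall>y\<in>I. \<bar>d y\<bar> \<le> M"
      using x0(2) unfolding M_def by (smt (verit))+
    have step: "\<bar>psi v - psi u\<bar> + \<bar>d v - d u\<bar> \<le> L * M * (v - u)"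
      if uv: "u \<in> I" "v \<in> I" "u \<le> v" for u v
    proof -
      have sub: "{u..v} \<subseteq> I" using uv by (auto simp: I_def)
      have u0: "0 \<le> u" "v \<le> a" using uv Isub by auto
      have "\<bar>psi v - psi u\<bar> \<le> M * (v - u)"
        using psi_bd[OF u0(1) uv(3) u0(2) M0] pb sub by blast
      moreover have "\<bar>d v - d u\<bar> \<le> B * M * (v - u)"
        using d_bd[OF u0(1) uv(3) u0(2) M0] pb sub by blast
      ultimately show ?thesis by (simp add: L_def algebra_simps)
    qed
    have LM: "0 \<le> L * M" using L0 M0 by simp
    have "M \<le> L * M * h"
    proof (cases "s \<le> x0")
      case True
      have "x0 - s \<le> h" using x0(1) by (auto simp: I_def)
      then have "L * M * (x0 - s) \<le> L * M * h" using LM by (intro mult_left_mono) auto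
      then show ?thesis using step[OF sI x0(1) True] s by (simp add: M_def)
    next
      case False
      have "s - x0 \<le> h" using x0(1) by (auto simp: I_def)
      then have "L * M * (s - x0) \<le> L * M * h" using LM by (intro mult_left_mono) auto
      then show ?thesis using step[OF x0(1) sI] False s by (simp add: M_def)
    qed
    also have "\<dots> = (L * h) * M" by (simp add: mult_ac)
    also have "\<dots> = M / 2" using Lh by simp
    finally have "M \<le> 0" by simp
    then have "\<bar>psi x\<bar> + \<bar>d x\<bar> \<le> 0" using x0(2) xI unfolding M_def by (smt (verit))
    then have "\<bar>psi x\<bar> = 0" "\<bar>d x\<bar> = 0" by (smt (verit) abs_ge_zero)+
    then show ?thesis by simp
  qed
  have glob: "\<forall>x\<in>{0..a}. \<bar>x - t\<bar> \<le> real k * h \<longrightarrow> psi x = 0 \<and> d x = 0" for k :: nat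
  proof (induction k)
    case 0
    then show ?case using z by auto
  next
    case (Suc k)
    show ?case
    proof (intro ballI impI)
      fix x assume x: "x \<in> {0..a}" "\<bar>x - t\<bar> \<le> real (Suc k) * h"
      define l where "l = real k / real (Suc k)"
      define s where "s = t + (x - t) * l"
      have l0: "0 \<le> l" "l \<le> 1" by (auto simp: l_def)
      have l1: "1 - l = 1 / real (Suc k)" by (simp add: l_def field_simps)
      have seq: "s = (1 - l) * t + l * x" by (simp add: s_def algebra_simps)
      have "0 \<le> (1 - l) * t" "0 \<le> l * x" using l0 t x by auto
      moreover have "(1 - l) * t \<le> (1 - l) * a" "l * x \<le> l * a"
        using l0 t x by (auto intro: mult_left_mono)
      ultimately have s0: "s \<in> {0..a}" unfolding seq by (auto simp: algebra_simps)
      have "\<bar>s - t\<bar> = l * \<bar>x - t\<bar>" using l0 by (simp add: s_def abs_mult)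
      also have "\<dots> \<le> l * (real (Suc k) * h)" using l0 x by (intro mult_left_mono) auto
      also have "\<dots> = real k * h" by (simp add: l_def)
      finally have "psi s = 0 \<and> d s = 0" using Suc.IH s0 by blast
      moreover have "\<bar>x - s\<bar> \<le> h"
      proof -
        have "x - s = (1 - l) * (x - t)" by (simp add: s_def algebra_simps)
        then have "\<bar>x - s\<bar> = (1 - l) * \<bar>x - t\<bar>" using l0 by (simp add: abs_mult)
        also have "\<dots> \<le> (1 - l) * (real (Suc k) * h)" using l0 x by (intro mult_left_mono) auto
        also have "\<dots> = h" using l1 by simp
        finally show ?thesis .
      qed
      ultimately show "psi x = 0 \<and> d x = 0" using local[OF s0 _ _ x(1)] by blast
    qed
  qed
  obtain k :: nat where k: "a / h \<le> real k" using real_arch_simple by blast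
  then have "a \<le> real k * h" using hpos by (simp add: field_simps)
  then show ?thesis using glob[of k] t by (auto simp: abs_le_iff)
qed



lemma esol_deriv0:
  assumes sol: "esol q a p dp gp" and a: "0 < a" and z: "\<forall>x\<in>{0..a}. p x = 0"
  shows "dp 0 = 0"
proof -
  have D0: "\<forall>x\<in>{0..a}. (p has_real_derivative dp x) (at x within {0..a})"
    using sol unfolding esol_def H2_edge_def by blast
  have D: "(p has_real_derivative dp 0) (at 0 within {0..a})"
    using D0[rule_format, of 0] a by simp
  have "((\<lambda>x. 0) has_real_derivative dp 0) (at 0 within {0..a})"
    by (rule has_field_derivative_transform_within[OF D zero_less_one]) (use a z in auto)
  moreover have "((\<lambda>x. 0) has_real_derivative 0) (at 0 within {0..a})" by simp
  ultimately have V1: "((\<lambda>x::real. 0::real) has_vector_derivative dp 0) (at 0 within cbox 0 a)"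
    and V2: "((\<lambda>x::real. 0::real) has_vector_derivative 0) (at 0 within cbox 0 a)"
    by (simp_all add: has_real_derivative_iff_has_vector_derivative)
  have "(0::real) \<in> cbox 0 a" using a by simp
  from vector_derivative_unique_within_closed_interval[OF a this V1 V2] show ?thesis .
qed

lemma lin_elim:
  fixes F :: "(nat \<Rightarrow> real) set" and K :: "nat set"
  shows "finite F \<Longrightarrow> finite K \<Longrightarrow> card F \<le> r \<Longrightarrow> r < card K \<Longrightarrow>
         \<exists>c. (\<exists>k\<in>K. c k \<noteq> 0) \<and> (\<forall>f\<in>F. (\<Sum>k\<in>K. f k * c k) = 0)"
proof (induction r arbitrary: F K)
  case 0
  then have "F = {}" by auto
  obtain k0 where "k0 \<in> K" using "0.prems"(4) by (metis card.empty ex_in_conv less_irrefl)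
  then show ?case using \<open>F = {}\<close> by (intro exI[of _ "\<lambda>k. 1"]) auto
next
  case (Suc r)
  have finF: "finite F" and finK: "finite K" using Suc.prems by auto
  show ?case
  proof (cases "F = {}")
    case True
    obtain k0 where "k0 \<in> K" using Suc.prems(4) by (metis card.empty ex_in_conv not_less0)
    then show ?thesis using True by (intro exI[of _ "\<lambda>k. 1"]) auto
  next
    case False
    then obtain f where f: "f \<in> F" by blast
    have cF0: "card (F - {f}) \<le> r" using Suc.prems f by (simp add: card_Diff_singleton)
    show ?thesis
    proof (cases "\<forall>k\<in>K. f k = 0")
      case True
      obtain c where c: "\<exists>k\<in>K. c k \<noteq> 0" "\<forall>h\<in>F - {f}. (\<Sum>k\<in>K. h k * c k) = 0"
        using Suc.IH[of "F - {f}" K] Suc.prems cF0 by auto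
      have "(\<Sum>k\<in>K. f k * c k) = 0" using True by simp
      then show ?thesis using c by (metis DiffI empty_iff insert_iff)
    next
      case False
      then obtain j where j: "j \<in> K" "f j \<noteq> 0" by blast
      have "card ((\<lambda>h k. h k - h j * f k / f j) ` (F - {f})) \<le> card (F - {f})"
        by (rule card_image_le) (use finF in auto)
      then have cF': "card ((\<lambda>h k. h k - h j * f k / f j) ` (F - {f})) \<le> r" using cF0 by linarith
      have cK': "r < card (K - {j})" using Suc.prems j by (simp add: card_Diff_singleton)
      obtain c' where c': "\<exists>k\<in>K - {j}. c' k \<noteq> 0"
        "\<forall>h\<in>(\<lambda>h k. h k - h j * f k / f j) ` (F - {f}). (\<Sum>k\<in>K - {j}. h k * c' k) = 0"
        using Suc.IH[OF _ _ cF' cK'] finF finK by auto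
      define c where "c = c'(j := - (\<Sum>k\<in>K - {j}. f k * c' k) / f j)"
      have sumK: "(\<Sum>k\<in>K. h k * c k) = h j * c j + (\<Sum>k\<in>K - {j}. h k * c' k)" for h
      proof -
        have "(\<Sum>k\<in>K. h k * c k) = h j * c j + (\<Sum>k\<in>K - {j}. h k * c k)"
          using sum.remove[OF finK j(1)] .
        moreover have "(\<Sum>k\<in>K - {j}. h k * c k) = (\<Sum>k\<in>K - {j}. h k * c' k)"
          by (rule sum.cong) (auto simp: c_def)
        ultimately show ?thesis by simp
      qed
      have cj: "c j = - (\<Sum>k\<in>K - {j}. f k * c' k) / f j" by (simp add: c_def)
      show ?thesis
      proof (intro exI conjI)
        show "\<exists>k\<in>K. c k \<noteq> 0" using c'(1) by (auto simp: c_def)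
        show "\<forall>h\<in>F. (\<Sum>k\<in>K. h k * c k) = 0"
        proof
          fix h assume h: "h \<in> F"
          show "(\<Sum>k\<in>K. h k * c k) = 0"
          proof (cases "h = f")
            case True then show ?thesis using sumK[of f] cj j(2) by simp
          next
            case False
            have mem: "(\<lambda>k. h k - h j * f k / f j) \<in> (\<lambda>h k. h k - h j * f k / f j) ` (F - {f})"
              using h False by auto
            have "(\<Sum>k\<in>K - {j}. (h k - h j * f k / f j) * c' k) = 0" using bspec[OF c'(2) mem] by simp
            moreover have "(\<Sum>k\<in>K - {j}. (h k - h j * f k / f j) * c' k)
                = (\<Sum>k\<in>K - {j}. h k * c' k) - h j / f j * (\<Sum>k\<in>K - {j}. f k * c' k)"
            proof -
              have "(\<Sum>k\<in>K - {j}. (h k - h j * f k / f j) * c' k)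
                  = (\<Sum>k\<in>K - {j}. h k * c' k - h j / f j * (f k * c' k))"
                by (rule sum.cong) (simp_all add: algebra_simps)
              also have "\<dots> = (\<Sum>k\<in>K - {j}. h k * c' k) - (\<Sum>k\<in>K - {j}. h j / f j * (f k * c' k))"
                by (rule sum_subtractf)
              also have "\<dots> = (\<Sum>k\<in>K - {j}. h k * c' k) - h j / f j * (\<Sum>k\<in>K - {j}. f k * c' k)"
                by (simp add: sum_distrib_left)
              finally show ?thesis .
            qed
            ultimately show ?thesis using sumK[of h] cj j(2) by (simp add: field_simps)
          qed
        qed
      qed
    qed
  qed
qed



theorem proposition1:
  fixes n m :: nat and a :: "nat \<Rightarrow> real" and Q :: "nat \<Rightarrow> real \<Rightarrow> real"
  assumes a_pos: "\<And>i. i < n \<Longrightarrow> a i > 0"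
    and Q_meas: "\<And>i. i < n \<Longrightarrow> set_borel_measurable lebesgue {0..a i} (Q i)"
    and Q_bdd: "\<And>i. i < n \<Longrightarrow> \<exists>B. AE x in lebesgue. x \<in> {0..a i} \<longrightarrow> \<bar>Q i x\<bar> \<le> B"
    and m_ge: "m \<ge> 2"
  shows "(\<exists>psi :: nat \<Rightarrow> nat \<Rightarrow> real \<Rightarrow> real.
            (\<forall>k<m. graph_sol n a Q (psi k)) \<and> graph_lin_indep n a m psi)
         \<longleftrightarrow> m + 1 \<le> card {i. i < n \<and> edge_dirichlet_neumann_nontrivial (Q i) (a i)}"
proof -
  define S where "S = {i. i < n \<and> edge_dirichlet_neumann_nontrivial (Q i) (a i)}"
  have finS: "finite S" unfolding S_def by simp
  have Sn: "i < n" if "i \<in> S" for i using that by (simp add: S_def)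
  obtain Bq where Bq: "\<And>i. i < n \<Longrightarrow> AE x in lebesgue. x \<in> {0..a i} \<longrightarrow> \<bar>Q i x\<bar> \<le> Bq i"
    using Q_bdd by metis
  have uniq: "\<forall>x\<in>{0..a i}. p x = 0 \<and> dp x = 0"
    if "i < n" "esol (Q i) (a i) p dp gp" "t \<in> {0..a i}" "p t = 0" "dp t = 0" for i p dp gp t
    using esol_unique[OF that(2) Bq[OF that(1)] that(3,4,5)] .
  have DN: "\<exists>z dz gz. esol (Q i) (a i) z dz gz \<and> z 0 = 0 \<and> dz (a i) = 0 \<and> (\<exists>x\<in>{0..a i}. z x \<noteq> 0)
              \<and> dz 0 \<noteq> 0 \<and> z (a i) \<noteq> 0"
    if iS: "i \<in> S" for i
  proof -
    have i: "i < n" and "edge_dirichlet_neumann_nontrivial (Q i) (a i)" using iS by (auto simp: S_def)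
    then obtain z dz gz where sol: "esol (Q i) (a i) z dz gz" and z0: "z 0 = 0" and dza: "dz (a i) = 0"
      and nz: "\<exists>x\<in>{0..a i}. z x \<noteq> 0"
      unfolding edge_dirichlet_neumann_nontrivial_def edge_sol_esol by blast
    have ai: "0 < a i" using a_pos i .
    have "dz 0 \<noteq> 0"
    proof
      assume "dz 0 = 0"
      then have "\<forall>x\<in>{0..a i}. z x = 0 \<and> dz x = 0" using uniq[OF i sol, of 0] z0 ai by auto
      then show False using nz by auto
    qed
    moreover have "z (a i) \<noteq> 0"
    proof
      assume "z (a i) = 0"
      then have "\<forall>x\<in>{0..a i}. z x = 0 \<and> dz x = 0" using uniq[OF i sol, of "a i"] dza ai by auto
      then show False using nz by auto
    qed
    ultimately show ?thesis using sol z0 dza nz by blast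
  qed

  have rl: "\<exists>psi :: nat \<Rightarrow> nat \<Rightarrow> real \<Rightarrow> real.
            (\<forall>k<m. graph_sol n a Q (psi k)) \<and> graph_lin_indep n a m psi"
    if card: "m + 1 \<le> card S"
  proof -
    have "card {..m} \<le> card S" using card by simp
    then obtain e where e: "e ` {..m} \<subseteq> S" "inj_on e {..m}"
      using card_le_inj[of "{..m}" S] finS by auto
    have "\<forall>i\<in>S. \<exists>P. esol (Q i) (a i) (fst P) (fst (snd P)) (snd (snd P)) \<and> fst P 0 = 0
        \<and> fst (snd P) (a i) = 0 \<and> (\<exists>x\<in>{0..a i}. fst P x \<noteq> 0) \<and> fst (snd P) 0 \<noteq> 0"
    proof
      fix i assume "i \<in> S"
      then obtain z dz gz where "esol (Q i) (a i) z dz gz \<and> z 0 = 0 \<and> dz (a i) = 0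
          \<and> (\<exists>x\<in>{0..a i}. z x \<noteq> 0) \<and> dz 0 \<noteq> 0" using DN by blast
      then show "\<exists>P. esol (Q i) (a i) (fst P) (fst (snd P)) (snd (snd P)) \<and> fst P 0 = 0
        \<and> fst (snd P) (a i) = 0 \<and> (\<exists>x\<in>{0..a i}. fst P x \<noteq> 0) \<and> fst (snd P) 0 \<noteq> 0"
        by (intro exI[of _ "(z, dz, gz)"]) simp
    qed
    from bchoice[OF this] obtain P where P: "\<forall>i\<in>S. esol (Q i) (a i) (fst (P i)) (fst (snd (P i))) (snd (snd (P i)))
        \<and> fst (P i) 0 = 0 \<and> fst (snd (P i)) (a i) = 0 \<and> (\<exists>x\<in>{0..a i}. fst (P i) x \<noteq> 0)
        \<and> fst (snd (P i)) 0 \<noteq> 0" by blast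
    define Z where "Z = (\<lambda>i. fst (P i))"
    define DZ where "DZ = (\<lambda>i. fst (snd (P i)))"
    define GZ where "GZ = (\<lambda>i. snd (snd (P i)))"
    have ZS: "esol (Q i) (a i) (Z i) (DZ i) (GZ i)" "Z i 0 = 0" "DZ i (a i) = 0"
      "\<exists>x\<in>{0..a i}. Z i x \<noteq> 0" "DZ i 0 \<noteq> 0" if "i \<in> S" for i
      using P that unfolding Z_def DZ_def GZ_def by blast+
    define w where "w = (\<lambda>i. 1 / DZ i 0)"
    define sg where "sg = (\<lambda>k i. if i = e k then w i else if i = e m then - w i else (0::real))"
    have em: "e k \<noteq> e m" if "k < m" for k
      using inj_on_eq_iff[OF e(2), of k m] that by auto
    have ekS: "e k \<in> S" if "k \<le> m" for k using e(1) that by auto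
    have sgS: "i \<in> S" if "k < m" "sg k i \<noteq> 0" for k i
      using that ekS[of k] ekS[of m] unfolding sg_def by (auto split: if_splits)
    define psi where "psi = (\<lambda>k i x. sg k i * Z i x)"
    define dd where "dd = (\<lambda>k i x. sg k i * DZ i x)"
    define gg where "gg = (\<lambda>k i x. sg k i * GZ i x)"
    have esolk: "esol (Q i) (a i) (psi k i) (dd k i) (gg k i)" if k: "k < m" for k i
    proof (cases "sg k i = 0")
      case True then show ?thesis using esol_zero by (simp add: psi_def dd_def gg_def)
    next
      case False then have "i \<in> S" using sgS k by blast
      then show ?thesis using esol_scale[OF ZS(1)] unfolding psi_def dd_def gg_def by blast
    qed
    have psi0: "psi k i 0 = 0" if "k < m" for k i
      using ZS(2)[of i] sgS[OF that, of i] by (cases "sg k i = 0") (auto simp: psi_def)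
    have dda: "dd k i (a i) = 0" if "k < m" for k i
      using ZS(3)[of i] sgS[OF that, of i] by (cases "sg k i = 0") (auto simp: dd_def)
    have dd0: "dd k i 0 = (if i = e k then 1 else 0) - (if i = e m then 1 else 0)" if k: "k < m" for k i
    proof -
      have wD: "w j * DZ j 0 = 1" if "j \<in> S" for j using ZS(5)[OF that] by (simp add: w_def)
      show ?thesis
        using em[OF k] wD[OF ekS[of k]] wD[OF ekS[of m]] k by (auto simp: dd_def sg_def)
    qed
    have gs: "graph_sol n a Q (psi k)" if k: "k < m" for k
    proof -
      have "\<forall>i<n. edge_sol (Q i) (a i) (psi k i) (dd k i)" using esolk[OF k] edge_sol_esol by blast
      moreover have "\<forall>i<n. \<forall>j<n. psi k i 0 = psi k j 0" using psi0[OF k] by simp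
      moreover have "(\<Sum>i<n. dd k i 0) = 0"
      proof -
        have "(\<Sum>i<n. dd k i 0) = (\<Sum>i<n. (if i = e k then 1 else 0) - (if i = e m then (1::real) else 0))"
          using dd0[OF k] by simp
        also have "\<dots> = (\<Sum>i<n. if i = e k then 1 else 0) - (\<Sum>i<n. if i = e m then (1::real) else 0)"
          by (rule sum_subtractf)
        also have "\<dots> = 0" using Sn[OF ekS[of k]] Sn[OF ekS[of m]] k by simp
        finally show ?thesis .
      qed
      moreover have "\<forall>i<n. dd k i (a i) = 0" using dda[OF k] by simp
      ultimately show ?thesis unfolding graph_sol_def by blast
    qed
    have li: "graph_lin_indep n a m psi"
      unfolding graph_lin_indep_def
    proof (intro allI impI)
      fix c :: "nat \<Rightarrow> real"
      assume H: "\<forall>i<n. \<forall>x\<in>{0..a i}. (\<Sum>k<m. c k * psi k i x) = 0"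
      fix k0 assume k0: "k0 < m"
      define i0 where "i0 = e k0"
      have i0S: "i0 \<in> S" using ekS k0 by (simp add: i0_def)
      obtain x0 where x0: "x0 \<in> {0..a i0}" "Z i0 x0 \<noteq> 0" using ZS(4)[OF i0S] by blast
      have ps: "psi k i0 x0 = (if k = k0 then w i0 * Z i0 x0 else 0)" if "k < m" for k
      proof -
        have "e k = i0 \<longleftrightarrow> k = k0" using inj_on_eq_iff[OF e(2), of k k0] that k0 by (simp add: i0_def)
        moreover have "i0 \<noteq> e m" using em[OF k0] by (simp add: i0_def)
        ultimately show ?thesis by (auto simp: psi_def sg_def)
      qed
      have "(\<Sum>k<m. c k * psi k i0 x0) = (\<Sum>k<m. if k = k0 then c k0 * (w i0 * Z i0 x0) else 0)"
        by (rule sum.cong) (auto simp: ps)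
      also have "\<dots> = c k0 * (w i0 * Z i0 x0)" using k0 by simp
      finally have "c k0 * (w i0 * Z i0 x0) = 0" using H Sn[OF i0S] x0(1) by auto
      moreover have "w i0 \<noteq> 0" using ZS(5)[OF i0S] by (simp add: w_def)
      ultimately show "c k0 = 0" using x0(2) by simp
    qed
    show ?thesis using gs li by blast
  qed

  have lr: "m + 1 \<le> card S"
    if ex: "\<exists>psi :: nat \<Rightarrow> nat \<Rightarrow> real \<Rightarrow> real.
            (\<forall>k<m. graph_sol n a Q (psi k)) \<and> graph_lin_indep n a m psi"
  proof (rule ccontr)
    assume ncard: "\<not> m + 1 \<le> card S"
    obtain psi :: "nat \<Rightarrow> nat \<Rightarrow> real \<Rightarrow> real" where sols: "\<forall>k<m. graph_sol n a Q (psi k)"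
      and ind: "graph_lin_indep n a m psi" using ex by blast
    have ind': "\<forall>k<m. c k = 0" if "\<forall>i<n. \<forall>x\<in>{0..a i}. (\<Sum>k<m. c k * psi k i x) = 0" for c
      using ind that unfolding graph_lin_indep_def by blast
    have n0: "0 < n"
    proof (rule ccontr)
      assume "\<not> 0 < n"
      then have A: "\<forall>k<m. (\<lambda>_. 1::real) k = 0" using ind'[of "\<lambda>_. 1"] by auto
      have "(0::nat) < m" using m_ge by simp
      from A[rule_format, OF this] show False by simp
    qed
    have "\<forall>k\<in>{..<m}. \<exists>d. (\<forall>i<n. edge_sol (Q i) (a i) (psi k i) (d i)) \<and>
          (\<forall>i<n. \<forall>j<n. psi k i 0 = psi k j 0) \<and> (\<Sum>i<n. d i 0) = 0 \<and> (\<forall>i<n. d i (a i) = 0)"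
      using sols unfolding graph_sol_def by auto
    from bchoice[OF this] obtain D where D: "\<forall>k\<in>{..<m}. (\<forall>i<n. edge_sol (Q i) (a i) (psi k i) (D k i)) \<and>
          (\<forall>i<n. \<forall>j<n. psi k i 0 = psi k j 0) \<and> (\<Sum>i<n. D k i 0) = 0 \<and> (\<forall>i<n. D k i (a i) = 0)"
      by blast
    have "\<forall>p\<in>{..<m} \<times> {..<n}. \<exists>g. esol (Q (snd p)) (a (snd p)) (psi (fst p) (snd p)) (D (fst p) (snd p)) g"
      using D unfolding edge_sol_esol by auto
    from bchoice[OF this] obtain G' where G': "\<forall>p\<in>{..<m} \<times> {..<n}.
        esol (Q (snd p)) (a (snd p)) (psi (fst p) (snd p)) (D (fst p) (snd p)) (G' p)" by blast
    define G where "G = (\<lambda>k i. G' (k, i))"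
    have esolD: "esol (Q i) (a i) (psi k i) (D k i) (G k i)" if "k < m" "i < n" for k i
      using G' that unfolding G_def by auto
    have Dk: "(\<forall>i<n. \<forall>j<n. psi k i 0 = psi k j 0) \<and> (\<Sum>i<n. D k i 0) = 0 \<and> (\<forall>i<n. D k i (a i) = 0)"
      if "k < m" for k using D that by blast
    have kir: "psi k i 0 = psi k 0 0" if "k < m" "i < n" for k i
      using Dk[OF that(1)] that(2) n0 by blast
    have sumD: "(\<Sum>i<n. D k i 0) = 0" if "k < m" for k using Dk[OF that] by blast
    have neuD: "D k i (a i) = 0" if "k < m" "i < n" for k i using Dk[OF that(1)] that(2) by blast
    have comb: "esol (Q i) (a i) (\<lambda>x. \<Sum>k<m. c k * psi k i x) (\<lambda>x. \<Sum>k<m. c k * D k i x)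
        (\<lambda>x. \<Sum>k<m. c k * G k i x)" if i: "i < n" for c i
      by (rule esol_sum) (auto intro!: esol_scale esolD i)
    have claimA: "(\<Sum>k<m. c k * D k i 0) = 0"
      if p0: "(\<Sum>k<m. c k * psi k 0 0) = 0" and i: "i < n" and iS: "i \<notin> S" for c i
    proof (rule ccontr)
      assume nz: "(\<Sum>k<m. c k * D k i 0) \<noteq> 0"
      have sol: "esol (Q i) (a i) (\<lambda>x. \<Sum>k<m. c k * psi k i x) (\<lambda>x. \<Sum>k<m. c k * D k i x)
        (\<lambda>x. \<Sum>k<m. c k * G k i x)" using comb[OF i] .
      have "(\<Sum>k<m. c k * psi k i 0) = (\<Sum>k<m. c k * psi k 0 0)"
        by (rule sum.cong) (simp_all add: kir i)
      then have pi0: "(\<Sum>k<m. c k * psi k i 0) = 0" using p0 by simp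
      have na: "(\<Sum>k<m. c k * D k i (a i)) = 0" using neuD i by simp
      have nontriv: "\<exists>x\<in>{0..a i}. (\<Sum>k<m. c k * psi k i x) \<noteq> 0"
      proof (rule ccontr)
        assume "\<not> (\<exists>x\<in>{0..a i}. (\<Sum>k<m. c k * psi k i x) \<noteq> 0)"
        then have "\<forall>x\<in>{0..a i}. (\<Sum>k<m. c k * psi k i x) = 0" by auto
        from esol_deriv0[OF sol a_pos[OF i] this] nz show False by simp
      qed
      have "edge_dirichlet_neumann_nontrivial (Q i) (a i)"
        unfolding edge_dirichlet_neumann_nontrivial_def edge_sol_esol
        apply (rule exI[of _ "\<lambda>x. \<Sum>k<m. c k * psi k i x"])
        apply (rule exI[of _ "\<lambda>x. \<Sum>k<m. c k * D k i x"])
        using sol pi0 na nontriv by blast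
      then have "i \<in> S" using i by (simp add: S_def)
      then show False using iS by blast
    qed
    have claimB: "\<forall>k<m. c k = 0"
      if H: "\<forall>i<n. (\<Sum>k<m. c k * psi k i 0) = 0 \<and> (\<Sum>k<m. c k * D k i 0) = 0" for c
    proof (rule ind')
      show "\<forall>i<n. \<forall>x\<in>{0..a i}. (\<Sum>k<m. c k * psi k i x) = 0"
      proof (intro allI impI)
        fix i assume i: "i < n"
        have z0m: "0 \<in> {0..a i}" using a_pos[OF i] by simp
        have h1: "(\<Sum>k<m. c k * psi k i 0) = 0" and h2: "(\<Sum>k<m. c k * D k i 0) = 0" using H i by blast+
        from uniq[OF i comb[OF i] z0m h1 h2] show "\<forall>x\<in>{0..a i}. (\<Sum>k<m. c k * psi k i x) = 0" by blast
      qed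
    qed
    have claimC: "psi k 0 0 = 0" if Sne: "S \<noteq> {}" and k: "k < m" for k
    proof -
      obtain i where iS: "i \<in> S" using Sne by blast
      have i: "i < n" using Sn[OF iS] .
      obtain z dz gz where zsol: "esol (Q i) (a i) z dz gz" and z0: "z 0 = 0" and dza: "dz (a i) = 0"
        and za: "z (a i) \<noteq> 0" using DN[OF iS] by blast
      have wsol: "esol (Q i) (a i) (\<lambda>x. psi k i (a i) * z x + (- z (a i)) * psi k i x)
          (\<lambda>x. psi k i (a i) * dz x + (- z (a i)) * D k i x)
          (\<lambda>x. psi k i (a i) * gz x + (- z (a i)) * G k i x)"
        by (rule esol_add[OF esol_scale[OF zsol] esol_scale[OF esolD[OF k i]]])
      have "a i \<in> {0..a i}" using a_pos[OF i] by simp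
      from uniq[OF i wsol this] have "\<forall>x\<in>{0..a i}. psi k i (a i) * z x + (- z (a i)) * psi k i x = 0"
        using dza neuD[OF k i] by (simp add: mult.commute)
      moreover have "0 \<in> {0..a i}" using a_pos[OF i] by simp
      ultimately have "z (a i) * psi k i 0 = 0" using z0 by force
      then have "psi k i 0 = 0" using za by simp
      then show ?thesis using kir[OF k i] by simp
    qed
    obtain c where cnz: "\<exists>k\<in>{..<m}. c k \<noteq> 0" and p0: "(\<Sum>k<m. c k * psi k 0 0) = 0"
      and dS: "\<forall>i\<in>S. (\<Sum>k<m. c k * D k i 0) = 0"
    proof (cases "S = {}")
      case True
      have "\<exists>c. (\<exists>k\<in>{..<m}. c k \<noteq> 0) \<and> (\<forall>f\<in>{\<lambda>k. psi k 0 0}. (\<Sum>k\<in>{..<m}. f k * c k) = 0)"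
        by (rule lin_elim[where r=1]) (use m_ge in auto)
      then obtain c where c1: "\<exists>k\<in>{..<m}. c k \<noteq> 0" and c2: "(\<Sum>k<m. psi k 0 0 * c k) = 0" by auto
      have "(\<Sum>k<m. c k * psi k 0 0) = 0" using c2 by (simp add: mult.commute)
      then show ?thesis using that[of c] c1 True by blast
    next
      case False
      then obtain i0 where i0: "i0 \<in> S" by blast
      have "card ((\<lambda>i k. D k i 0) ` (S - {i0})) \<le> card (S - {i0})" by (rule card_image_le) (use finS in auto)
      also have "\<dots> = card S - 1" using i0 finS by (simp add: card_Diff_singleton)
      finally have cF: "card ((\<lambda>i k. D k i 0) ` (S - {i0})) \<le> m - 1" using ncard by linarith
      have "\<exists>c. (\<exists>k\<in>{..<m}. c k \<noteq> 0) \<and> (\<forall>f\<in>(\<lambda>i k. D k i 0) ` (S - {i0}). (\<Sum>k\<in>{..<m}. f k * c k) = 0)"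
        by (rule lin_elim[where r="m - 1"]) (use cF m_ge finS in auto)
      then obtain c where c1: "\<exists>k\<in>{..<m}. c k \<noteq> 0"
        and c2: "\<forall>f\<in>(\<lambda>i k. D k i 0) ` (S - {i0}). (\<Sum>k\<in>{..<m}. f k * c k) = 0" by blast
      have dS': "(\<Sum>k<m. c k * D k i 0) = 0" if "i \<in> S - {i0}" for i
      proof -
        have "(\<lambda>k. D k i 0) \<in> (\<lambda>i k. D k i 0) ` (S - {i0})" using that by blast
        from bspec[OF c2 this] show ?thesis by (simp add: mult.commute)
      qed
      have p0: "(\<Sum>k<m. c k * psi k 0 0) = 0" using claimC[OF False] by simp
      have other: "(\<Sum>k<m. c k * D k i 0) = 0" if "i < n" "i \<noteq> i0" for i
      proof (cases "i \<in> S")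
        case True then show ?thesis using dS' that by blast
      next
        case False then show ?thesis using claimA[OF p0 that(1)] by blast
      qed
      have tot: "(\<Sum>i<n. \<Sum>k<m. c k * D k i 0) = 0"
      proof -
        have "(\<Sum>i<n. \<Sum>k<m. c k * D k i 0) = (\<Sum>k<m. c k * (\<Sum>i<n. D k i 0))"
          by (subst sum.swap) (simp add: sum_distrib_left)
        also have "\<dots> = 0" using sumD by simp
        finally show ?thesis .
      qed
      have i0n: "i0 \<in> {..<n}" using Sn[OF i0] by simp
      have "(\<Sum>i<n. \<Sum>k<m. c k * D k i 0) = (\<Sum>k<m. c k * D k i0 0) + (\<Sum>i\<in>{..<n} - {i0}. \<Sum>k<m. c k * D k i 0)"
        using sum.remove[OF _ i0n] by simp
      also have "(\<Sum>i\<in>{..<n} - {i0}. \<Sum>k<m. c k * D k i 0) = 0"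
        by (rule sum.neutral) (use other in auto)
      finally have "(\<Sum>k<m. c k * D k i0 0) = 0" using tot by simp
      then have "\<forall>i\<in>S. (\<Sum>k<m. c k * D k i 0) = 0" using dS' by blast
      then show ?thesis using that[of c] c1 p0 by blast
    qed
    have "\<forall>i<n. (\<Sum>k<m. c k * psi k i 0) = 0 \<and> (\<Sum>k<m. c k * D k i 0) = 0"
    proof (intro allI impI conjI)
      fix i assume i: "i < n"
      have "(\<Sum>k<m. c k * psi k i 0) = (\<Sum>k<m. c k * psi k 0 0)"
        by (rule sum.cong) (simp_all add: kir i)
      then show "(\<Sum>k<m. c k * psi k i 0) = 0" using p0 by simp
      show "(\<Sum>k<m. c k * D k i 0) = 0"
        using dS claimA[OF p0 i] by (cases "i \<in> S") auto
    qed
    from claimB[OF this] cnz show False by auto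
  qed
  show ?thesis using rl lr unfolding S_def by blast
qed


end
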